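(* Let $\mathcal{X}$ be a sample space (e.g. $\mathbb{R}^d$), let $c:\mathcal{X}\times\mathcal{X}\to[0,\infty)$ be a cost function with $c(x,x)=0$ for all $x$, and let $\lambda>0$. Let $\mu,\mu_c,\nu$ be probability measures on $\mathcal{X}$, let $\epsilon\in[0,1)$ and set $\tilde\mu=(1-\epsilon)\mu+\epsilon\mu_c$. Then \[ \mathrm{ROBOT}(\tilde\mu,\nu)\le \min\Big\{\mathrm{OT}(\mu,\nu)+\lambda\,\epsilon\,\|\mu-\mu_c\|_{\mathrm{TV}},\ \ \lambda\|\tilde\mu-\nu\|_{\mathrm{TV}},\ \ \mathrm{OT}(\tilde\mu,\nu)\Big\}. \]
   Context: For probability measures $\mu,\nu$ on $\mathcal{X}$, $\mathrm{OT}(\mu,\nu)=\min_{\Pi}\mathbb{E}_{(X_1,X_2)\sim\Pi}[c(X_1,X_2)]$, the minimum over all couplings $\Pi$ of $\mu$ and $\nu$ (probability measures on $\mathcal{X}\times\mathcal{X}$ with marginals $\mu$ and $\nu$). For a signed measure $s$, the total-variation norm is $\|s\|_{\mathrm{TV}}=\int\frac12|s(\mathrm{d}x)|$. The robust optimal transport value is \[ \mathrm{ROBOT}(\mu,\nu)=\inf_{\pi,s}\ \iint c(x,y)\,\pi(\mathrm{d}x,\mathrm{d}y)+\lambda\|s\|_{\mathrm{TV}}, \] where the infimum is over signed measures $s$ on $\mathcal{X}$ with $\int s(\mathrm{d}x)=0$ and $\mu+s\ge 0$, and nonnegative measures $\pi$ on $\mathcal{X}\times\mathcal{X}$ whose first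 marginal is $\mu+s$ and whose second marginal is $\nu$. *)

theory Defs
  imports "HOL-Probability.Probability"
begin

definition signed_measure :: "'a measure \<Rightarrow> ('a set \<Rightarrow> real) \<Rightarrow> bool" where
  "signed_measure M s \<longleftrightarrow> s {} = 0 \<and>
     (\<forall>A. range A \<subseteq> sets M \<longrightarrow> disjoint_family A \<longrightarrow> (\<lambda>i. s (A i)) sums s (\<Union>i. A i))"

definition tv_norm :: "'a measure \<Rightarrow> ('a set \<Rightarrow> real) \<Rightarrow> ennreal" where
  "tv_norm M s = (SUP P \<in> {P. finite P \<and> P \<subseteq> sets M \<and> disjoint P \<and> \<Union>P = space M}.
                    ennreal (\<Sum>A\<in>P. \<bar>s A\<bar>)) / 2"

definition coupling :: "'a measure \<Rightarrow> 'a measure \<Rightarrow> 'a measure \<Rightarrow> ('a \<times> 'a) measure \<Rightarrow> bool" where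
  "coupling M \<mu> \<nu> \<pi> \<longleftrightarrow> sets \<pi> = sets (M \<Otimes>\<^sub>M M) \<and>
     (\<forall>A\<in>sets M. emeasure \<pi> (A \<times> space M) = emeasure \<mu> A) \<and>
     (\<forall>B\<in>sets M. emeasure \<pi> (space M \<times> B) = emeasure \<nu> B)"

definition OT :: "'a measure \<Rightarrow> ('a \<times> 'a \<Rightarrow> real) \<Rightarrow> 'a measure \<Rightarrow> 'a measure \<Rightarrow> ennreal" where
  "OT M c \<mu> \<nu> = (INF \<pi> \<in> {\<pi>. coupling M \<mu> \<nu> \<pi>}. \<integral>\<^sup>+ z. ennreal (c z) \<partial>\<pi>)"

definition ROBOT :: "'a measure \<Rightarrow> ('a \<times> 'a \<Rightarrow> real) \<Rightarrow> real \<Rightarrow> 'a measure \<Rightarrow> 'a measure \<Rightarrow> ennreal" where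
  "ROBOT M c lam \<mu> \<nu> =
    (INF (\<pi>, s) \<in> {(\<pi>, s). signed_measure M s \<and> s (space M) = 0 \<and>
         (\<forall>A\<in>sets M. 0 \<le> measure \<mu> A + s A) \<and>
         sets \<pi> = sets (M \<Otimes>\<^sub>M M) \<and>
         (\<forall>A\<in>sets M. emeasure \<pi> (A \<times> space M) = ennreal (measure \<mu> A + s A)) \<and>
         (\<forall>B\<in>sets M. emeasure \<pi> (space M \<times> B) = emeasure \<nu> B)}.
       (\<integral>\<^sup>+ z. ennreal (c z) \<partial>\<pi>) + ennreal lam * tv_norm M s)"

end

theory Submission
  imports Defs
begin

lemma INF_ennreal_add_const_set:
  fixes f :: "'b \<Rightarrow> ennreal"
  assumes "I \<noteq> {}"
  shows "(INF i\<in>I. f i + c) = (INF i\<in>I. f i) + c"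
  using continuous_at_Inf_mono[of "\<lambda>x. x + c" "f`I"] assms
  using continuous_add[of "at_right (Inf (f`I))", of "\<lambda>x. x" "\<lambda>x. c"]
  by (auto simp: mono_def image_comp)

lemma robot_le:
  assumes "signed_measure M s" "s (space M) = 0"
    "\<forall>A\<in>sets M. 0 \<le> measure \<mu> A + s A"
    "sets \<pi> = sets (M \<Otimes>\<^sub>M M)"
    "\<forall>A\<in>sets M. emeasure \<pi> (A \<times> space M) = ennreal (measure \<mu> A + s A)"
    "\<forall>B\<in>sets M. emeasure \<pi> (space M \<times> B) = emeasure \<nu> B"
  shows "ROBOT M c lam \<mu> \<nu> \<le> (\<integral>\<^sup>+ z. ennreal (c z) \<partial>\<pi>) + ennreal lam * tv_norm M s"
  unfolding ROBOT_def
  by (rule INF_lower2[of "(\<pi>, s)"]) (use assms in auto)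

lemma tv_norm_scale:
  assumes "0 \<le> a"
  shows "tv_norm M (\<lambda>A. a * s A) = ennreal a * tv_norm M s"
proof -
  have "\<And>P. ennreal (\<Sum>A\<in>P. \<bar>a * s A\<bar>) = ennreal a * ennreal (\<Sum>A\<in>P. \<bar>s A\<bar>)"
    using assms by (simp add: abs_mult sum_distrib_left[symmetric] ennreal_mult sum_nonneg)
  then show ?thesis
    unfolding tv_norm_def by (simp add: SUP_mult_left_ennreal ennreal_times_divide)
qed

lemma tv_norm_sym: "tv_norm M (\<lambda>A. f A - g A) = tv_norm M (\<lambda>A. g A - f A)"
  unfolding tv_norm_def by (simp add: abs_minus_commute)

lemma tv_norm_zero: "tv_norm M (\<lambda>A. 0) = 0"
  unfolding tv_norm_def by (simp add: bot_ennreal[symmetric], simp add: bot_ennreal)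

lemma signed_measure_diff:
  assumes "finite_measure m1" "sets m1 = sets M" "finite_measure m2" "sets m2 = sets M"
  shows "signed_measure M (\<lambda>A. a * (measure m1 A - measure m2 A))"
  unfolding signed_measure_def
proof safe
  fix A :: "nat \<Rightarrow> _" assume "range A \<subseteq> sets M" "disjoint_family A"
  then have "(\<lambda>i. measure m1 (A i)) sums measure m1 (\<Union>i. A i)"
    "(\<lambda>i. measure m2 (A i)) sums measure m2 (\<Union>i. A i)"
    using assms finite_measure.finite_measure_UNION by metis+
  then show "(\<lambda>i. a * (measure m1 (A i) - measure m2 (A i))) sums (a * (measure m1 (\<Union>i. A i) - measure m2 (\<Union>i. A i)))"
    by (intro sums_mult sums_diff)
qed simp

theorem theorem1:
  fixes M :: "'a measure" and c :: "'a \<times> 'a \<Rightarrow> real" and lam \<epsilon> :: real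
    and \<mu> \<mu>c \<nu> \<mu>t :: "'a measure"
  assumes c_meas: "c \<in> borel_measurable (M \<Otimes>\<^sub>M M)"
    and c_nonneg: "\<And>z. c z \<ge> 0"
    and c_diag: "\<And>x. c (x, x) = 0"
    and lam: "lam > 0"
    and P\<mu>: "prob_space \<mu>" "sets \<mu> = sets M"
    and P\<mu>c: "prob_space \<mu>c" "sets \<mu>c = sets M"
    and P\<nu>: "prob_space \<nu>" "sets \<nu> = sets M"
    and eps: "0 \<le> \<epsilon>" "\<epsilon> < 1"
    and mix_sets: "sets \<mu>t = sets M"
    and mix: "\<And>A. A \<in> sets M \<Longrightarrow>
               emeasure \<mu>t A = ennreal (1 - \<epsilon>) * emeasure \<mu> A + ennreal \<epsilon> * emeasure \<mu>c A"
  shows "ROBOT M c lam \<mu>t \<nu> \<le>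
           min (OT M c \<mu> \<nu> + ennreal (lam * \<epsilon>) * tv_norm M (\<lambda>A. measure \<mu> A - measure \<mu>c A))
               (min (ennreal lam * tv_norm M (\<lambda>A. measure \<mu>t A - measure \<nu> A))
                    (OT M c \<mu>t \<nu>))"
proof -
  have sp: "space \<mu> = space M" "space \<mu>c = space M" "space \<nu> = space M" "space \<mu>t = space M"
    using P\<mu> P\<mu>c P\<nu> mix_sets sets_eq_imp_space_eq by metis+
  have mixr: "measure \<mu>t A = (1 - \<epsilon>) * measure \<mu> A + \<epsilon> * measure \<mu>c A" if A: "A \<in> sets M" for A
  proof -
    have "emeasure \<mu>t A = ennreal ((1 - \<epsilon>) * measure \<mu> A + \<epsilon> * measure \<mu>c A)"
      using mix[OF A] P\<mu> P\<mu>c eps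
      by (simp add: finite_measure.emeasure_eq_measure prob_space.finite_measure ennreal_mult[symmetric] ennreal_plus[symmetric] del: ennreal_plus)
    moreover have "0 \<le> (1 - \<epsilon>) * measure \<mu> A + \<epsilon> * measure \<mu>c A" using eps by simp
    ultimately show ?thesis unfolding measure_def by (metis enn2real_ennreal)
  qed
  have Pt: "prob_space \<mu>t"
  proof
    have "emeasure \<mu>t (space M) = ennreal (1 - \<epsilon>) + ennreal \<epsilon>"
      using mix[of "space M"] P\<mu> P\<mu>c sp prob_space.emeasure_space_1[of \<mu>] prob_space.emeasure_space_1[of \<mu>c]
      by simp
    also have "\<dots> = ennreal ((1 - \<epsilon>) + \<epsilon>)" using eps by (subst ennreal_plus) auto
    finally have "emeasure \<mu>t (space M) = 1" by simp
    then show "emeasure \<mu>t (space \<mu>t) = 1" using sp by simp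
  qed
  have fin: "finite_measure \<mu>" "finite_measure \<mu>c" "finite_measure \<nu>" "finite_measure \<mu>t"
    using P\<mu> P\<mu>c P\<nu> Pt prob_space.finite_measure by blast+
  have em: "\<And>m A. prob_space m \<Longrightarrow> emeasure m A = ennreal (measure m A)"
    by (simp add: finite_measure.emeasure_eq_measure prob_space.finite_measure)
  have b3: "ROBOT M c lam \<mu>t \<nu> \<le> OT M c \<mu>t \<nu>"
    unfolding OT_def
  proof (rule INF_greatest)
    fix \<pi> assume "\<pi> \<in> {\<pi>. coupling M \<mu>t \<nu> \<pi>}"
    then have cp: "coupling M \<mu>t \<nu> \<pi>" by simp
    have "ROBOT M c lam \<mu>t \<nu> \<le> (\<integral>\<^sup>+ z. ennreal (c z) \<partial>\<pi>) + ennreal lam * tv_norm M (\<lambda>A. 0 * (measure \<nu> A - measure \<mu>t A))"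
      apply (rule robot_le)
      apply (rule signed_measure_diff) using fin P\<nu> mix_sets cp em[OF Pt]
      by (auto simp: coupling_def)
    then show "ROBOT M c lam \<mu>t \<nu> \<le> (\<integral>\<^sup>+ z. ennreal (c z) \<partial>\<pi>)"
      by (simp add: tv_norm_zero)
  qed
  define \<pi> where "\<pi> = distr \<nu> (M \<Otimes>\<^sub>M M) (\<lambda>x. (x, x))"
  have dm: "(\<lambda>x. (x, x)) \<in> measurable \<nu> (M \<Otimes>\<^sub>M M)"
    using P\<nu> by (intro measurable_Pair) (auto simp: measurable_ident_sets)
  have b2: "ROBOT M c lam \<mu>t \<nu> \<le> ennreal lam * tv_norm M (\<lambda>A. measure \<mu>t A - measure \<nu> A)"
  proof -
    have "ROBOT M c lam \<mu>t \<nu> \<le> (\<integral>\<^sup>+ z. ennreal (c z) \<partial>\<pi>) + ennreal lam * tv_norm M (\<lambda>A. 1 * (measure \<nu> A - measure \<mu>t A))"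
    proof (rule robot_le)
      show "signed_measure M (\<lambda>A. 1 * (measure \<nu> A - measure \<mu>t A))"
        using fin P\<nu> mix_sets by (intro signed_measure_diff) auto
      show "1 * (measure \<nu> (space M) - measure \<mu>t (space M)) = 0"
        using P\<nu> Pt sp prob_space.prob_space[of \<nu>] prob_space.prob_space[of \<mu>t] by simp
      show "\<forall>A\<in>sets M. 0 \<le> measure \<mu>t A + 1 * (measure \<nu> A - measure \<mu>t A)" by simp
      show "sets \<pi> = sets (M \<Otimes>\<^sub>M M)" unfolding \<pi>_def by simp
      show "\<forall>A\<in>sets M. emeasure \<pi> (A \<times> space M) = ennreal (measure \<mu>t A + 1 * (measure \<nu> A - measure \<mu>t A))"
      proof
        fix A assume A: "A \<in> sets M"
        have "emeasure \<pi> (A \<times> space M) = emeasure \<nu> ((\<lambda>x. (x, x)) -` (A \<times> space M) \<inter> space \<nu>)"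
          unfolding \<pi>_def using A dm by (intro emeasure_distr) auto
        also have "(\<lambda>x. (x, x)) -` (A \<times> space M) \<inter> space \<nu> = A"
          using A sets.sets_into_space sp by fastforce
        finally show "emeasure \<pi> (A \<times> space M) = ennreal (measure \<mu>t A + 1 * (measure \<nu> A - measure \<mu>t A))"
          using em[OF P\<nu>(1)] by simp
      qed
      show "\<forall>B\<in>sets M. emeasure \<pi> (space M \<times> B) = emeasure \<nu> B"
      proof
        fix A assume A: "A \<in> sets M"
        have "emeasure \<pi> (space M \<times> A) = emeasure \<nu> ((\<lambda>x. (x, x)) -` (space M \<times> A) \<inter> space \<nu>)"
          unfolding \<pi>_def using A dm by (intro emeasure_distr) auto
        also have "(\<lambda>x. (x, x)) -` (space M \<times> A) \<inter> space \<nu> = A"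
          using A sets.sets_into_space sp by fastforce
        finally show "emeasure \<pi> (space M \<times> A) = emeasure \<nu> A" .
      qed
    qed
    moreover have "(\<integral>\<^sup>+ z. ennreal (c z) \<partial>\<pi>) = 0"
    proof -
      have "(\<integral>\<^sup>+ z. ennreal (c z) \<partial>\<pi>) = (\<integral>\<^sup>+ x. ennreal (c (x, x)) \<partial>\<nu>)"
        unfolding \<pi>_def using dm c_meas by (intro nn_integral_distr) auto
      then show ?thesis by (simp add: c_diag)
    qed
    ultimately show ?thesis by (simp add: tv_norm_sym[of _ "measure \<nu>"])
  qed
  have b1: "ROBOT M c lam \<mu>t \<nu> \<le> OT M c \<mu> \<nu> + ennreal (lam * \<epsilon>) * tv_norm M (\<lambda>A. measure \<mu> A - measure \<mu>c A)"
  proof (cases "{\<pi>. coupling M \<mu> \<nu> \<pi>} = {}")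
    case True
    then show ?thesis unfolding OT_def True by simp
  next
    case False
    have "ROBOT M c lam \<mu>t \<nu> \<le> (\<integral>\<^sup>+ z. ennreal (c z) \<partial>\<pi>) + ennreal (lam * \<epsilon>) * tv_norm M (\<lambda>A. measure \<mu> A - measure \<mu>c A)"
      if cp: "coupling M \<mu> \<nu> \<pi>" for \<pi>
    proof -
      have "ROBOT M c lam \<mu>t \<nu> \<le> (\<integral>\<^sup>+ z. ennreal (c z) \<partial>\<pi>) + ennreal lam * tv_norm M (\<lambda>A. \<epsilon> * (measure \<mu> A - measure \<mu>c A))"
      proof (rule robot_le)
        show "signed_measure M (\<lambda>A. \<epsilon> * (measure \<mu> A - measure \<mu>c A))"
          using fin P\<mu> P\<mu>c by (intro signed_measure_diff) auto
        show "\<epsilon> * (measure \<mu> (space M) - measure \<mu>c (space M)) = 0"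
          using P\<mu> P\<mu>c sp prob_space.prob_space[of \<mu>] prob_space.prob_space[of \<mu>c] by simp
        have key: "measure \<mu>t A + \<epsilon> * (measure \<mu> A - measure \<mu>c A) = measure \<mu> A" if "A \<in> sets M" for A
          using mixr[OF that] by (simp add: algebra_simps)
        show "\<forall>A\<in>sets M. 0 \<le> measure \<mu>t A + \<epsilon> * (measure \<mu> A - measure \<mu>c A)"
          using key by simp
        show "sets \<pi> = sets (M \<Otimes>\<^sub>M M)" using cp by (simp add: coupling_def)
        show "\<forall>A\<in>sets M. emeasure \<pi> (A \<times> space M) = ennreal (measure \<mu>t A + \<epsilon> * (measure \<mu> A - measure \<mu>c A))"
          using key cp em[OF P\<mu>(1)] by (simp add: coupling_def)
        show "\<forall>B\<in>sets M. emeasure \<pi> (space M \<times> B) = emeasure \<nu> B"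
          using cp by (simp add: coupling_def)
      qed
      then show ?thesis
        using eps lam by (simp add: tv_norm_scale ennreal_mult mult.assoc)
    qed
    then have "ROBOT M c lam \<mu>t \<nu> \<le> (INF \<pi> \<in> {\<pi>. coupling M \<mu> \<nu> \<pi>}. (\<integral>\<^sup>+ z. ennreal (c z) \<partial>\<pi>) + ennreal (lam * \<epsilon>) * tv_norm M (\<lambda>A. measure \<mu> A - measure \<mu>c A))"
      by (intro INF_greatest) auto
    then show ?thesis
      unfolding OT_def using INF_ennreal_add_const_set[OF False] by simp
  qed
  show ?thesis using b1 b2 b3 by (intro min.boundedI)
qed

end
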